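(* Let $A\in\mathbb{R}^{n\times n}$, $\bm{u},\bm{v},\bm{g}\in\mathbb{R}^n$ with $\bm{g}-A\bm{u}\ne0$ and $\bm{v}\ne0$. Perform $m$ Arnoldi steps for $A$ with starting vector $\bm{g}-A\bm{u}$, giving $V_m^{(\psi)},\bm{v}_{m+1}^{(\psi)},H_m^{(\psi)},h_{m+1,m}^{(\psi)}\ge0$ with $AV_m^{(\psi)}=V_m^{(\psi)}H_m^{(\psi)}+h^{(\psi)}_{m+1,m}\bm{v}^{(\psi)}_{m+1}\bm{e}_m^T$, and $m$ Arnoldi steps for $A$ with starting vector $\bm{v}$, giving $V_m^{(\sigma)},\bm{v}_{m+1}^{(\sigma)},H_m^{(\sigma)},h_{m+1,m}^{(\sigma)}\ge0$ analogously. Let $u^{(\psi)}$ solve $u''=-H_m^{(\psi)}u+\|\bm{g}-A\bm{u}\|\bm{e}_1$, $u(0)=u'(0)=0$, and $u^{(\sigma)}$ solve $u''=-H_m^{(\sigma)}u$, $u(0)=0$, $u'(0)=\|\bm{v}\|\bm{e}_1$, and set $\bm{y}_m(t)=\bm{u}+V_m^{(\psi)}u^{(\psi)}(t)+V_m^{(\sigma)}u^{(\sigma)}(t)$ and $\bm{r}_m(t)=-A\bm{y}_m(t)+\bm{g}-\bm{y}_m''(t)$. Then for all $t\ge0$, $$\|\bm{r}_m(t)\|\le h^{(\psi)}_{m+1,m}\,t\varphi(-t\hat\omega^{(\psi)})\|\bm{g}-A\bm{u}\|+h^{(\sigma)}_{m+1,m}\,t\varphi(-t\hat\omega^{(\sigma)})\|\bm{v}\|\le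 t\varphi(-t\hat\omega)\big(h^{(\psi)}_{m+1,m}\|\bm{g}-A\bm{u}\|+h^{(\sigma)}_{m+1,m}\|\bm{v}\|\big),$$ where $\hat\omega^{(\psi)}=-\tfrac12\|H_m^{(\psi)}-I\|$, $\hat\omega^{(\sigma)}=-\tfrac12\|H_m^{(\sigma)}-I\|$, $\hat\omega=\min\{\hat\omega^{(\psi)},\hat\omega^{(\sigma)}\}$. In particular, for every $\varepsilon>0$ there is $\delta>0$ with $\|\bm{r}_m(t)\|\le\varepsilon$ for $t\in[0,\delta]$.
   Context: $\varphi(z)=(e^z-1)/z$ with $\varphi(0)=1$. The Arnoldi process with $m$ steps for $A$ and a nonzero starting vector $\bm{w}$ yields $V_m$ with orthonormal columns, first column $\bm{w}/\|\bm{w}\|$, a unit vector $\bm{v}_{m+1}$ orthogonal to the columns of $V_m$, $H_m=V_m^TAV_m$ (upper Hessenberg) and $h_{m+1,m}\ge0$ with $AV_m=V_mH_m+h_{m+1,m}\bm{v}_{m+1}\bm{e}_m^T$. $\|\cdot\|$ is the Euclidean / spectral norm, $\bm{e}_j$ canonical unit vectors. *)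

theory Defs
  imports "HOL-Analysis.Analysis"
begin

text \<open>Vectors in R^n are functions nat => real, meaningful on indices 0..n-1;
  n x m matrices are functions nat => nat => real, meaningful on 0..n-1 x 0..m-1.
  Indices are 0-based: e_1 is index 0 and e_m is index m-1.\<close>

definition phi :: "real \<Rightarrow> real" where
  "phi z = (if z = 0 then 1 else (exp z - 1) / z)"

definition vnorm :: "nat \<Rightarrow> (nat \<Rightarrow> real) \<Rightarrow> real" where
  "vnorm n x = sqrt (\<Sum>i<n. (x i)\<^sup>2)"

definition mat_vec :: "nat \<Rightarrow> (nat \<Rightarrow> nat \<Rightarrow> real) \<Rightarrow> (nat \<Rightarrow> real) \<Rightarrow> (nat \<Rightarrow> real)" where
  "mat_vec c M x = (\<lambda>i. \<Sum>j<c. M i j * x j)"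

definition opnorm :: "nat \<Rightarrow> nat \<Rightarrow> (nat \<Rightarrow> nat \<Rightarrow> real) \<Rightarrow> real" where
  "opnorm r c M = Sup {vnorm r (mat_vec c M x) | x. vnorm c x \<le> 1}"

definition idmat :: "nat \<Rightarrow> nat \<Rightarrow> real" where
  "idmat i j = (if i = j then 1 else 0)"

text \<open>Output (V_m, v_{m+1}, H_m, h_{m+1,m}) of m Arnoldi steps for A (n x n) with
  starting vector w, as described in the context.\<close>
definition arnoldi ::
  "nat \<Rightarrow> nat \<Rightarrow> (nat \<Rightarrow> nat \<Rightarrow> real) \<Rightarrow> (nat \<Rightarrow> real) \<Rightarrow>
   (nat \<Rightarrow> nat \<Rightarrow> real) \<Rightarrow> (nat \<Rightarrow> real) \<Rightarrow> (nat \<Rightarrow> nat \<Rightarrow> real) \<Rightarrow> real \<Rightarrow> bool" where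
  "arnoldi n m A w V v H h \<longleftrightarrow>
     (\<forall>i<m. \<forall>j<m. (\<Sum>k<n. V k i * V k j) = idmat i j) \<and>
     (\<forall>k<n. V k 0 = w k / vnorm n w) \<and>
     vnorm n v = 1 \<and>
     (\<forall>j<m. (\<Sum>k<n. V k j * v k) = 0) \<and>
     (\<forall>i<m. \<forall>j<m. H i j = (\<Sum>k<n. \<Sum>l<n. V k i * A k l * V l j)) \<and>
     (\<forall>i<m. \<forall>j<m. j + 1 < i \<longrightarrow> H i j = 0) \<and>
     h \<ge> 0 \<and>
     (\<forall>k<n. \<forall>j<m. (\<Sum>l<n. A k l * V l j) =
         (\<Sum>i<m. V k i * H i j) + h * v k * (if j = m - 1 then 1 else 0))"

text \<open>u (components u 0, ..., u (m-1), each a function of t) solves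
  u'' = -H u + f on all of R with u(0) = u0, u'(0) = u1.\<close>
definition solves2 ::
  "nat \<Rightarrow> (nat \<Rightarrow> nat \<Rightarrow> real) \<Rightarrow> (nat \<Rightarrow> real) \<Rightarrow> (nat \<Rightarrow> real) \<Rightarrow> (nat \<Rightarrow> real) \<Rightarrow>
   (nat \<Rightarrow> real \<Rightarrow> real) \<Rightarrow> bool" where
  "solves2 m H f u0 u1 u \<longleftrightarrow>
     (\<exists>u'. (\<forall>i<m. \<forall>t. (u i has_real_derivative u' i t) (at t) \<and>
              (u' i has_real_derivative (- (\<Sum>j<m. H i j * u j t) + f i)) (at t)) \<and>
           (\<forall>i<m. u i 0 = u0 i \<and> u' i 0 = u1 i))"

end

theory Submission
  imports Defs
begin


lemma vnorm_L2: "vnorm n x = L2_set x {..<n}"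
  by (simp add: vnorm_def L2_set_def)

lemma vnorm_nonneg: "vnorm n x \<ge> 0"
  by (simp add: vnorm_def sum_nonneg)

lemma vnorm_cs: "(\<Sum>i<n. a i * b i) \<le> vnorm n a * vnorm n b"
proof -
  have "(\<Sum>i<n. a i * b i) \<le> (\<Sum>i<n. \<bar>a i\<bar> * \<bar>b i\<bar>)"
    by (rule sum_mono) (metis abs_ge_self abs_mult)
  also have "\<dots> \<le> vnorm n a * vnorm n b" unfolding vnorm_L2 by (rule L2_set_mult_ineq)
  finally show ?thesis .
qed

lemma vnorm_comp: "i < n \<Longrightarrow> \<bar>x i\<bar> \<le> vnorm n x"
proof -
  assume "i < n"
  have "\<bar>x i\<bar> \<le> L2_set (\<lambda>i. \<bar>x i\<bar>) {..<n}" using \<open>i<n\<close> by (intro member_le_L2_set) auto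
  also have "\<dots> = vnorm n x" unfolding vnorm_L2 L2_set_def by simp
  finally show ?thesis .
qed

lemma vnorm_sq: "(vnorm n x)^2 = (\<Sum>i<n. (x i)^2)"
  by (simp add: vnorm_def sum_nonneg)

lemma vnorm_tri: "vnorm n (\<lambda>k. x k + y k) \<le> vnorm n x + vnorm n y"
  unfolding vnorm_L2 by (rule L2_set_triangle_ineq)

lemma vnorm_scale: "vnorm n (\<lambda>k. c * x k) = \<bar>c\<bar> * vnorm n x"
proof -
  have "\<bar>c\<bar> * vnorm n x = L2_set (\<lambda>k. \<bar>c\<bar> * x k) {..<n}" unfolding vnorm_L2
    by (rule L2_set_right_distrib) simp
  also have "\<dots> = vnorm n (\<lambda>k. c * x k)" unfolding vnorm_L2 L2_set_def
    by (simp add: power_mult_distrib)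
  finally show ?thesis by simp
qed

lemma vnorm_cong: "(\<And>k. k < n \<Longrightarrow> x k = y k) \<Longrightarrow> vnorm n x = vnorm n y"
  unfolding vnorm_def by (intro arg_cong[where f=sqrt] sum.cong) auto

lemma opnorm_bdd: "bdd_above {vnorm r (mat_vec c M x) | x. vnorm c x \<le> 1}"
proof (rule bdd_aboveI)
  fix z assume "z \<in> {vnorm r (mat_vec c M x) | x. vnorm c x \<le> 1}"
  then obtain x where z: "z = vnorm r (mat_vec c M x)" and x: "vnorm c x \<le> 1" by auto
  have "z \<le> (\<Sum>i<r. \<bar>mat_vec c M x i\<bar>)" unfolding z vnorm_L2 by (rule L2_set_le_sum_abs)
  also have "\<dots> \<le> (\<Sum>i<r. \<Sum>j<c. \<bar>M i j\<bar>)"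
  proof (rule sum_mono)
    fix i
    have "\<bar>mat_vec c M x i\<bar> \<le> (\<Sum>j<c. \<bar>M i j * x j\<bar>)" unfolding mat_vec_def by (rule sum_abs)
    also have "\<dots> \<le> (\<Sum>j<c. \<bar>M i j\<bar>)"
    proof (rule sum_mono)
      fix j assume "j \<in> {..<c}"
      then have "\<bar>x j\<bar> \<le> 1" using vnorm_comp[of j c x] x by auto
      then show "\<bar>M i j * x j\<bar> \<le> \<bar>M i j\<bar>" by (simp add: abs_mult mult_left_le)
    qed
    finally show "\<bar>mat_vec c M x i\<bar> \<le> (\<Sum>j<c. \<bar>M i j\<bar>)" .
  qed
  finally show "z \<le> (\<Sum>i<r. \<Sum>j<c. \<bar>M i j\<bar>)" .
qed

lemma opnorm_upper: "vnorm c x \<le> 1 \<Longrightarrow> vnorm r (mat_vec c M x) \<le> opnorm r c M"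
  unfolding opnorm_def by (rule cSup_upper[OF _ opnorm_bdd]) auto

lemma opnorm_nonneg: "opnorm r c M \<ge> 0"
proof -
  have "vnorm c (\<lambda>_. 0) \<le> 1" by (simp add: vnorm_def)
  from opnorm_upper[OF this, of r M] show ?thesis using vnorm_nonneg order_trans by blast
qed

lemma opnorm_bound: "vnorm r (mat_vec c M x) \<le> opnorm r c M * vnorm c x"
proof (cases "vnorm c x = 0")
  case True
  then have "\<forall>j<c. x j = 0" unfolding vnorm_L2 by (simp add: L2_set_eq_0_iff)
  then have "vnorm r (mat_vec c M x) = 0" by (simp add: mat_vec_def vnorm_def)
  then show ?thesis using True by simp
next
  case False
  define s where "s = vnorm c x"
  have s: "s > 0" using False vnorm_nonneg[of c x] unfolding s_def by linarith
  have "vnorm c (\<lambda>k. (1/s) * x k) = \<bar>1/s\<bar> * s" unfolding s_def by (rule vnorm_scale)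
  then have "vnorm c (\<lambda>k. (1/s) * x k) = 1" using s by simp
  then have h0: "vnorm r (mat_vec c M (\<lambda>k. (1/s) * x k)) \<le> opnorm r c M" by (intro opnorm_upper) simp
  have "mat_vec c M (\<lambda>k. (1/s) * x k) = (\<lambda>i. (1/s) * mat_vec c M x i)"
    unfolding mat_vec_def by (simp add: sum_distrib_left mult.left_commute)
  with h0 have h: "vnorm r (\<lambda>i. (1/s) * mat_vec c M x i) \<le> opnorm r c M" by simp
  have "vnorm r (\<lambda>i. (1/s) * mat_vec c M x i) = \<bar>1/s\<bar> * vnorm r (mat_vec c M x)"
    by (rule vnorm_scale)
  then have "(1/s) * vnorm r (mat_vec c M x) \<le> opnorm r c M" using h s by simp
  then have "s * ((1/s) * vnorm r (mat_vec c M x)) \<le> s * opnorm r c M" using s by (intro mult_left_mono) auto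
  then have "vnorm r (mat_vec c M x) \<le> s * opnorm r c M" using s by simp
  then show ?thesis unfolding s_def by (simp add: mult.commute)
qed




lemma K_eq: "c \<noteq> 0 \<Longrightarrow> t * phi (c*t) = (exp (c*t) - 1) / c"
  by (cases "t = 0") (auto simp: phi_def field_simps)

lemma K_rel: "c * (t * phi (c*t)) = exp (c*t) - 1"
  by (cases "c = 0") (auto simp: K_eq)

lemma K_deriv: "((\<lambda>t. t * phi (c*t)) has_real_derivative exp (c*t)) (at t)"
proof (cases "c = 0")
  case True
  then show ?thesis by (simp add: phi_def)
next
  case False
  have "((\<lambda>t. (exp (c*t) - 1) / c) has_real_derivative exp (c*t)) (at t)"
    using False by (auto intro!: derivative_eq_intros)
  then show ?thesis using K_eq[OF False] by simp
qed

lemma K_zero[simp]: "0 * phi (c*0) = 0" by simp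

lemma small_slack:
  fixes a b C :: real
  assumes "C \<ge> 0" "\<And>d. d > 0 \<Longrightarrow> a \<le> b + C * sqrt d"
  shows "a \<le> b"
proof (rule ccontr)
  assume "\<not> a \<le> b"
  then have p: "a - b > 0" by simp
  define d where "d = ((a - b) / (C + 1))^2"
  have "d > 0" using p assms(1) by (simp add: d_def)
  have sd: "sqrt d = (a - b) / (C + 1)" using p assms(1) by (simp add: d_def)
  have "C * ((a - b) / (C + 1)) < a - b" using p assms(1) by (simp add: field_simps)
  then show False using assms(2)[OF \<open>d>0\<close>] sd by simp
qed




lemma energy:
  fixes m :: nat and H :: "nat \<Rightarrow> nat \<Rightarrow> real" and f :: "nat \<Rightarrow> real"
    and u u' :: "nat \<Rightarrow> real \<Rightarrow> real" and \<beta> t c :: real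
  assumes d1: "\<And>i s. i < m \<Longrightarrow> (u i has_real_derivative u' i s) (at s)"
    and d2: "\<And>i s. i < m \<Longrightarrow> (u' i has_real_derivative (- (\<Sum>j<m. H i j * u j s) + f i)) (at s)"
    and fb: "vnorm m f \<le> \<beta>" and t: "0 \<le> t"
    and c_def: "c = opnorm m m (\<lambda>i j. H i j - idmat i j) / 2"
  shows "sqrt (\<Sum>i<m. (u i t)^2 + (u' i t)^2)
           \<le> exp (c*t) * sqrt (\<Sum>i<m. (u i 0)^2 + (u' i 0)^2) + \<beta> * (t * phi (c*t))"
proof -
  define E where "E = (\<lambda>s. \<Sum>i<m. (u i s)^2 + (u' i s)^2)"
  define E' where "E' = (\<lambda>s. \<Sum>i<m. 2 * u i s * u' i s + 2 * u' i s * (- (\<Sum>j<m. H i j * u j s) + f i))"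
  define M where "M = (\<lambda>i j. H i j - idmat i j)"
  have c0: "c \<ge> 0" using opnorm_nonneg unfolding c_def by simp
  have b0: "\<beta> \<ge> 0" using fb vnorm_nonneg[of m f] by linarith
  have E0: "\<And>s. E s \<ge> 0" unfolding E_def by (auto intro!: sum_nonneg)
  have dE: "(E has_real_derivative E' s) (at s)" for s
    unfolding E_def E'_def
    by (rule DERIV_sum) (auto intro!: derivative_eq_intros d1 d2)
  have key: "E' s \<le> 2*c*E s + 2*\<beta>* sqrt (E s)" for s
  proof -
    define a where "a = (\<lambda>i. u' i s)"
    define b where "b = (\<lambda>i. u i s)"
    have mv: "mat_vec m M b i = (\<Sum>j<m. H i j * u j s) - u i s" if "i < m" for i
    proof -
      have "mat_vec m M b i = (\<Sum>j<m. H i j * u j s) - (\<Sum>j<m. (if i = j then 1 else 0) * u j s)"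
        unfolding mat_vec_def M_def idmat_def b_def by (simp add: left_diff_distrib sum_subtractf)
      also have "(\<Sum>j<m. (if i = j then 1 else 0) * u j s) = (\<Sum>j<m. if i = j then u j s else 0)"
        by (rule sum.cong) auto
      also have "\<dots> = u i s" using that by simp
      finally show ?thesis .
    qed
    have "E' s = (\<Sum>i<m. 2 * ((- a i) * mat_vec m M b i) + 2 * (a i * f i))"
      unfolding E'_def
    proof (rule sum.cong)
      fix i assume "i \<in> {..<m}"
      then have "i < m" by simp
      show "2 * u i s * u' i s + 2 * u' i s * (- (\<Sum>j<m. H i j * u j s) + f i) =
            2 * ((- a i) * mat_vec m M b i) + 2 * (a i * f i)"
        unfolding mv[OF \<open>i < m\<close>] a_def by (simp add: algebra_simps)
    qed simp
    also have "\<dots> = 2 * (\<Sum>i<m. (- a i) * mat_vec m M b i) + 2 * (\<Sum>i<m. a i * f i)"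
      by (simp only: sum.distrib sum_distrib_left)
    finally have e1: "E' s = 2 * (\<Sum>i<m. (- a i) * mat_vec m M b i) + 2 * (\<Sum>i<m. a i * f i)" .
    define A where "A = vnorm m a"
    define B where "B = vnorm m b"
    have A0: "A \<ge> 0" and B0: "B \<ge> 0" unfolding A_def B_def by (simp_all add: vnorm_nonneg)
    have na: "vnorm m (\<lambda>i. - a i) = A"
      using vnorm_scale[where n=m and c="-1" and x=a] unfolding A_def by simp
    have s1: "(\<Sum>i<m. (- a i) * mat_vec m M b i) \<le> A * vnorm m (mat_vec m M b)"
      using vnorm_cs[where n=m and a="\<lambda>i. - a i" and b="mat_vec m M b"] na by simp
    have s2: "vnorm m (mat_vec m M b) \<le> 2 * c * B"
      using opnorm_bound[of m m M b] unfolding c_def M_def B_def by simp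
    have s3: "(\<Sum>i<m. a i * f i) \<le> A * \<beta>"
    proof -
      have "(\<Sum>i<m. a i * f i) \<le> A * vnorm m f" unfolding A_def by (rule vnorm_cs)
      also have "\<dots> \<le> A * \<beta>" using fb A0 by (simp add: mult_left_mono)
      finally show ?thesis .
    qed
    have EAB: "E s = A^2 + B^2"
      unfolding E_def A_def B_def vnorm_sq a_def b_def by (simp add: sum.distrib)
    have AE: "A \<le> sqrt (E s)" using EAB A0 B0
      by (intro real_le_rsqrt) (simp add: add_increasing2)
    have "E' s \<le> 2 * (A * (2 * c * B)) + 2 * (A * \<beta>)"
    proof -
      have "A * vnorm m (mat_vec m M b) \<le> A * (2 * c * B)" using s2 A0 by (simp add: mult_left_mono)
      then show ?thesis using e1 s1 s3 by linarith
    qed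
    also have "\<dots> \<le> 2*c*E s + 2*\<beta>* sqrt (E s)"
    proof -
      have "2 * A * B \<le> A^2 + B^2" using sum_squares_bound[of A B] by (simp add: power2_eq_square)
      then have "c * (2 * A * B) \<le> c * (A^2 + B^2)" using c0 by (simp add: mult_left_mono)
      moreover have "A * \<beta> \<le> sqrt (E s) * \<beta>" using AE b0 by (simp add: mult_right_mono)
      ultimately show ?thesis using EAB by (simp add: algebra_simps)
    qed
    finally show ?thesis .
  qed
  have main: "sqrt (E t) \<le> exp (c*t) * sqrt (E 0) + \<beta> * (t * phi (c*t)) + exp (c*t) * sqrt \<delta>"
    if dpos: "\<delta> > 0" for \<delta>
  proof -
    define N where "N = (\<lambda>s. sqrt (E s + \<delta>))"
    have Npos: "N s > 0" for s unfolding N_def using E0[of s] dpos by simp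
    have NN: "(N s)^2 = E s + \<delta>" for s unfolding N_def using E0[of s] dpos by simp
    have dN: "(N has_real_derivative E' s / (2 * N s)) (at s)" for s
    proof -
      have "((\<lambda>s. sqrt (E s + \<delta>)) has_real_derivative inverse (sqrt (E s + \<delta>)) / 2 * E' s) (at s)"
        by (rule DERIV_chain2[OF DERIV_real_sqrt]) (use E0[of s] dpos in \<open>auto intro!: derivative_eq_intros dE\<close>)
      then show ?thesis unfolding N_def by (simp add: field_simps)
    qed
    define K where "K = (\<lambda>s. s * phi (c * s))"
    define q where "q = (\<lambda>s. exp (-c * s) * (N s - \<beta> * K s))"
    have dq: "(q has_real_derivative exp (-c * s) * (E' s / (2 * N s) - \<beta> * exp (c * s)) + exp (-c * s) * (-c) * (N s - \<beta> * K s)) (at s)" for s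
    proof -
      have e: "((\<lambda>s. exp (-c * s)) has_real_derivative exp (-c * s) * (-c)) (at s)"
        by (auto intro!: derivative_eq_intros)
      have g: "((\<lambda>s. N s - \<beta> * K s) has_real_derivative E' s / (2 * N s) - \<beta> * exp (c * s)) (at s)"
        unfolding K_def by (intro DERIV_diff dN DERIV_cmult K_deriv)
      show ?thesis using DERIV_mult'[OF e g] unfolding q_def by simp
    qed
    have dqn: "exp (-c * s) * (E' s / (2 * N s) - \<beta> * exp (c * s)) + exp (-c * s) * (-c) * (N s - \<beta> * K s) \<le> 0" for s
    proof -
      have cK: "c * K s = exp (c * s) - 1" unfolding K_def by (rule K_rel)
      have "E' s \<le> 2*c*(N s)^2 + 2*\<beta>*N s"
      proof -
        have "c * E s \<le> c * (N s)^2" using NN[of s] dpos c0 by (simp add: mult_left_mono)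
        moreover have "sqrt (E s) \<le> N s" unfolding N_def using dpos by simp
        then have "\<beta> * sqrt (E s) \<le> \<beta> * N s" using b0 by (simp add: mult_left_mono)
        ultimately show ?thesis using key[of s] by linarith
      qed
      then have "E' s / (2 * N s) \<le> c * N s + \<beta>" using Npos[of s]
        by (simp add: divide_le_eq power2_eq_square algebra_simps)
      then have "E' s / (2 * N s) - \<beta> * exp (c * s) + (-c) * (N s - \<beta> * K s) \<le> 0"
      proof -
        have "\<beta> * (c * K s) = \<beta> * exp (c * s) - \<beta>" unfolding cK by (simp add: right_diff_distrib)
        then show ?thesis using \<open>E' s / (2 * N s) \<le> c * N s + \<beta>\<close> by (simp add: algebra_simps)
      qed
      then have "exp (-c * s) * (E' s / (2 * N s) - \<beta> * exp (c * s) + (-c) * (N s - \<beta> * K s)) \<le> 0"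
        by (simp add: mult_nonneg_nonpos)
      then show ?thesis by (simp add: algebra_simps)
    qed
    have "q t \<le> q 0"
      by (rule DERIV_nonpos_imp_nonincreasing[OF t]) (use dq dqn in blast)
    then have "exp (-c*t) * (N t - \<beta> * K t) \<le> N 0" unfolding q_def K_def by simp
    then have "exp (c*t) * (exp (-c*t) * (N t - \<beta> * K t)) \<le> exp (c*t) * N 0"
      by (simp add: mult_left_mono)
    then have h1: "N t - \<beta> * K t \<le> exp (c*t) * N 0" by (simp add: mult.assoc[symmetric] exp_add[symmetric])
    have "N 0 \<le> sqrt (E 0) + sqrt \<delta>" unfolding N_def using E0[of 0] dpos by (intro sqrt_add_le_add_sqrt) auto
    then have h2: "exp (c*t) * N 0 \<le> exp (c*t) * sqrt (E 0) + exp (c*t) * sqrt \<delta>"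
      by (simp add: distrib_left[symmetric] mult_left_mono)
    have h3: "sqrt (E t) \<le> N t" unfolding N_def using dpos by simp
    show ?thesis using h1 h2 h3 unfolding K_def by linarith
  qed
  have "sqrt (E t) \<le> exp (c*t) * sqrt (E 0) + \<beta> * (t * phi (c*t))"
    by (rule small_slack[of "exp (c*t)"]) (use main in auto)
  then show ?thesis unfolding E_def by simp
qed




lemma K_mono:
  assumes "c1 \<le> c2" "0 \<le> t"
  shows "t * phi (c1*t) \<le> t * phi (c2*t)"
proof -
  have "(\<lambda>s. s * phi (c2* s) - s * phi (c1* s)) 0 \<le> (\<lambda>s. s * phi (c2* s) - s * phi (c1* s)) t"
  proof (rule DERIV_nonneg_imp_nondecreasing[OF assms(2)])
    fix x assume x: "0 \<le> x" "x \<le> t"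
    have "((\<lambda>s. s * phi (c2* s) - s * phi (c1* s)) has_real_derivative exp (c2*x) - exp (c1*x)) (at x)"
      by (intro DERIV_diff K_deriv)
    moreover have "exp (c2*x) - exp (c1*x) \<ge> 0" using x assms(1) by (simp add: mult_right_mono)
    ultimately show "\<exists>y. ((\<lambda>s. s * phi (c2* s) - s * phi (c1* s)) has_real_derivative y) (at x) \<and> 0 \<le> y"
      by blast
  qed
  then show ?thesis by simp
qed

lemma K_le:
  assumes "0 \<le> c" "0 \<le> t"
  shows "t * phi (c*t) \<le> t * exp (c*t)"
proof -
  have "(\<lambda>s. s * exp (c* s) - s * phi (c* s)) 0 \<le> (\<lambda>s. s * exp (c* s) - s * phi (c* s)) t"
  proof (rule DERIV_nonneg_imp_nondecreasing[OF assms(2)])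
    fix x assume x: "0 \<le> x" "x \<le> t"
    have "((\<lambda>s. s * exp (c* s) - s * phi (c* s)) has_real_derivative (exp (c*x) + x * (exp (c*x) * c)) - exp (c*x)) (at x)"
      by (intro DERIV_diff K_deriv) (auto intro!: derivative_eq_intros)
    moreover have "(exp (c*x) + x * (exp (c*x) * c)) - exp (c*x) \<ge> 0" using x assms(1) by simp
    ultimately show "\<exists>y. ((\<lambda>s. s * exp (c* s) - s * phi (c* s)) has_real_derivative y) (at x) \<and> 0 \<le> y"
      by blast
  qed
  then show ?thesis by simp
qed

lemma K_nonneg: "0 \<le> c \<Longrightarrow> 0 \<le> t \<Longrightarrow> 0 \<le> t * phi (c*t)"
  using K_mono[of 0 c t] by (simp add: phi_def)

lemma vnorm_pos: "\<exists>k<n. x k \<noteq> 0 \<Longrightarrow> vnorm n x > 0"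
proof -
  assume "\<exists>k<n. x k \<noteq> 0"
  then obtain k where "k < n" "x k \<noteq> 0" by blast
  then have "0 < \<bar>x k\<bar>" by simp
  also have "\<dots> \<le> vnorm n x" using vnorm_comp[OF \<open>k<n\<close>] .
  finally show ?thesis .
qed

lemma vnorm_e1: "1 \<le> m \<Longrightarrow> vnorm m (\<lambda>i. if i = 0 then b else 0) = \<bar>b\<bar>"
proof -
  assume m: "1 \<le> m"
  have "(\<Sum>i<m. (if i = 0 then b else 0)^2) = (\<Sum>i<m. if i = 0 then b^2 else 0)"
    by (rule sum.cong) auto
  also have "\<dots> = b^2" using m by (subst sum.delta) auto
  finally show ?thesis unfolding vnorm_def by simp
qed

lemma sq_e1: "1 \<le> (m::nat) \<Longrightarrow> (\<Sum>i<m. (0::real)^2 + (if i = 0 then b else 0)^2) = b^2"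
proof -
  assume m: "1 \<le> m"
  have "(\<Sum>i<m. (0::real)^2 + (if i = 0 then b else 0)^2) = (\<Sum>i<m. if i = 0 then b^2 else 0)"
    by (rule sum.cong) auto
  also have "\<dots> = b^2" using m by (subst sum.delta) auto
  finally show ?thesis .
qed

lemma arn_part:
  assumes arn: "arnoldi n m A w V v H h" and k: "k < n" and m: "1 \<le> m"
  shows "(\<Sum>l<n. A k l * (\<Sum>j<m. V l j * x j))
         = (\<Sum>i<m. V k i * (\<Sum>j<m. H i j * x j)) + h * v k * x (m-1)"
proof -
  have rel: "\<And>j. j < m \<Longrightarrow> (\<Sum>l<n. A k l * V l j) =
         (\<Sum>i<m. V k i * H i j) + h * v k * (if j = m - 1 then 1 else 0)"
    using arn k unfolding arnoldi_def by blast
  have "(\<Sum>l<n. A k l * (\<Sum>j<m. V l j * x j)) = (\<Sum>l<n. \<Sum>j<m. A k l * V l j * x j)"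
    by (simp add: sum_distrib_left mult.assoc)
  also have "\<dots> = (\<Sum>j<m. \<Sum>l<n. A k l * V l j * x j)" by (rule sum.swap)
  also have "\<dots> = (\<Sum>j<m. (\<Sum>l<n. A k l * V l j) * x j)" by (simp add: sum_distrib_right)
  also have "\<dots> = (\<Sum>j<m. ((\<Sum>i<m. V k i * H i j) * x j) + (if j = m - 1 then h * v k * x j else 0))"
    by (rule sum.cong) (auto simp: rel distrib_right)
  also have "\<dots> = (\<Sum>j<m. (\<Sum>i<m. V k i * H i j) * x j) + h * v k * x (m-1)"
  proof -
    have "(\<Sum>j<m. if j = m - 1 then h * v k * x j else 0) = h * v k * x (m-1)"
      using m by (subst sum.delta) auto
    then show ?thesis by (simp only: sum.distrib)
  qed
  also have "(\<Sum>j<m. (\<Sum>i<m. V k i * H i j) * x j) = (\<Sum>i<m. V k i * (\<Sum>j<m. H i j * x j))"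
  proof -
    have "(\<Sum>j<m. (\<Sum>i<m. V k i * H i j) * x j) = (\<Sum>j<m. \<Sum>i<m. V k i * H i j * x j)"
      by (simp add: sum_distrib_right)
    also have "\<dots> = (\<Sum>i<m. \<Sum>j<m. V k i * H i j * x j)" by (rule sum.swap)
    also have "\<dots> = (\<Sum>i<m. V k i * (\<Sum>j<m. H i j * x j))" by (simp add: sum_distrib_left mult.assoc)
    finally show ?thesis .
  qed
  finally show ?thesis .
qed




theorem proposition2p2:
  fixes n m :: nat
    and A :: "nat \<Rightarrow> nat \<Rightarrow> real"
    and u v g :: "nat \<Rightarrow> real"
    and Vp Vs Hp Hs :: "nat \<Rightarrow> nat \<Rightarrow> real"
    and vp vs :: "nat \<Rightarrow> real"
    and hp hs :: real
    and up us :: "nat \<Rightarrow> real \<Rightarrow> real"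
    and y r :: "nat \<Rightarrow> real \<Rightarrow> real"
  assumes m_pos: "m \<ge> 1"
    and res_nz: "\<exists>k<n. g k - mat_vec n A u k \<noteq> 0"
    and v_nz: "\<exists>k<n. v k \<noteq> 0"
    and arn_p: "arnoldi n m A (\<lambda>k. g k - mat_vec n A u k) Vp vp Hp hp"
    and arn_s: "arnoldi n m A v Vs vs Hs hs"
    and ode_p: "solves2 m Hp (\<lambda>i. if i = 0 then vnorm n (\<lambda>k. g k - mat_vec n A u k) else 0)
                  (\<lambda>i. 0) (\<lambda>i. 0) up"
    and ode_s: "solves2 m Hs (\<lambda>i. 0) (\<lambda>i. 0) (\<lambda>i. if i = 0 then vnorm n v else 0) us"
    and y_def: "\<And>k t. y k t = u k + (\<Sum>j<m. Vp k j * up j t) + (\<Sum>j<m. Vs k j * us j t)"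
    and r_def: "\<And>k t. r k t = - (\<Sum>l<n. A k l * y l t) + g k - deriv (deriv (y k)) t"
  shows "(\<forall>t\<ge>0.
           let wp = - (1/2) * opnorm m m (\<lambda>i j. Hp i j - idmat i j);
               ws = - (1/2) * opnorm m m (\<lambda>i j. Hs i j - idmat i j);
               w = min wp ws;
               beta = vnorm n (\<lambda>k. g k - mat_vec n A u k)
           in vnorm n (\<lambda>k. r k t)
                \<le> hp * t * phi (- t * wp) * beta + hs * t * phi (- t * ws) * vnorm n v
            \<and> hp * t * phi (- t * wp) * beta + hs * t * phi (- t * ws) * vnorm n v
                \<le> t * phi (- t * w) * (hp * beta + hs * vnorm n v))
       \<and> (\<forall>\<epsilon>>0. \<exists>\<delta>>0. \<forall>t\<in>{0..\<delta>}. vnorm n (\<lambda>k. r k t) \<le> \<epsilon>)"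
proof -
  define bp where "bp = vnorm n (\<lambda>k. g k - mat_vec n A u k)"
  define bs where "bs = vnorm n v"
  define cp where "cp = opnorm m m (\<lambda>i j. Hp i j - idmat i j) / 2"
  define cs where "cs = opnorm m m (\<lambda>i j. Hs i j - idmat i j) / 2"
  define cw where "cw = max cp cs"
  have bp_pos: "bp > 0" unfolding bp_def by (rule vnorm_pos[OF res_nz])
  have bs_pos: "bs > 0" unfolding bs_def by (rule vnorm_pos[OF v_nz])
  have cp0: "cp \<ge> 0" unfolding cp_def using opnorm_nonneg by simp
  have cs0: "cs \<ge> 0" unfolding cs_def using opnorm_nonneg by simp
  have hp0: "hp \<ge> 0" and vp1: "vnorm n vp = 1" using arn_p unfolding arnoldi_def by auto
  have hs0: "hs \<ge> 0" and vs1: "vnorm n vs = 1" using arn_s unfolding arnoldi_def by auto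
  have m1: "m - 1 < m" using m_pos by simp
  obtain up' where dp: "\<forall>i<m. \<forall>t. (up i has_real_derivative up' i t) (at t) \<and>
       (up' i has_real_derivative (- (\<Sum>j<m. Hp i j * up j t) + (if i = 0 then bp else 0))) (at t)"
    and ip: "\<forall>i<m. up i 0 = 0 \<and> up' i 0 = 0"
    using ode_p unfolding solves2_def bp_def by blast
  obtain us' where ds: "\<forall>i<m. \<forall>t. (us i has_real_derivative us' i t) (at t) \<and>
       (us' i has_real_derivative (- (\<Sum>j<m. Hs i j * us j t) + 0)) (at t)"
    and ius: "\<forall>i<m. us i 0 = 0 \<and> us' i 0 = (if i = 0 then bs else 0)"
    using ode_s unfolding solves2_def bs_def by blast
  have dp1: "\<And>i t. i < m \<Longrightarrow> (up i has_real_derivative up' i t) (at t)" using dp by blast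
  have dp2: "\<And>i t. i < m \<Longrightarrow> (up' i has_real_derivative (- (\<Sum>j<m. Hp i j * up j t) + (if i = 0 then bp else 0))) (at t)" using dp by blast
  have ds1: "\<And>i t. i < m \<Longrightarrow> (us i has_real_derivative us' i t) (at t)" using ds by blast
  have ds2: "\<And>i t. i < m \<Longrightarrow> (us' i has_real_derivative (- (\<Sum>j<m. Hs i j * us j t) + 0)) (at t)" using ds by blast

  have Bp: "\<bar>up (m-1) t\<bar> \<le> bp * (t * phi (cp*t))" if t: "0 \<le> t" for t
  proof -
    have en: "sqrt (\<Sum>i<m. (up i t)^2 + (up' i t)^2)
           \<le> exp (cp*t) * sqrt (\<Sum>i<m. (up i 0)^2 + (up' i 0)^2) + bp * (t * phi (cp*t))"
      by (rule energy[where H=Hp and f="\<lambda>i. if i = 0 then bp else 0"])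
         (use dp1 dp2 t vnorm_e1[OF m_pos, of bp] bp_pos cp_def in auto)
    have "(\<Sum>i<m. (up i 0)^2 + (up' i 0)^2) = 0" using ip by (intro sum.neutral) auto
    with en have en2: "sqrt (\<Sum>i<m. (up i t)^2 + (up' i t)^2) \<le> bp * (t * phi (cp*t))" by simp
    have "(up (m-1) t)^2 + (up' (m-1) t)^2 \<le> (\<Sum>i<m. (up i t)^2 + (up' i t)^2)"
      by (rule member_le_sum) (use m1 in auto)
    then have "\<bar>up (m-1) t\<bar>^2 \<le> (\<Sum>i<m. (up i t)^2 + (up' i t)^2)"
      using zero_le_power2[of "up' (m-1) t"] by (simp only: power2_abs)
    then have "\<bar>up (m-1) t\<bar> \<le> sqrt (\<Sum>i<m. (up i t)^2 + (up' i t)^2)" by (rule real_le_rsqrt)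
    with en2 show ?thesis by linarith
  qed

  have Bs': "\<bar>us' (m-1) s\<bar> \<le> exp (cs* s) * bs" if s: "0 \<le> s" for s
  proof -
    have en: "sqrt (\<Sum>i<m. (us i s)^2 + (us' i s)^2)
           \<le> exp (cs* s) * sqrt (\<Sum>i<m. (us i 0)^2 + (us' i 0)^2) + 0 * (s * phi (cs* s))"
      by (rule energy[where H=Hs and f="\<lambda>i. 0"])
         (use ds1 ds2 s cs_def in \<open>auto simp: vnorm_def\<close>)
    have "(\<Sum>i<m. (us i 0)^2 + (us' i 0)^2) = (\<Sum>i<m. (0::real)^2 + (if i = 0 then bs else 0)^2)"
      using ius by (intro sum.cong) auto
    also have "\<dots> = bs^2" by (rule sq_e1[OF m_pos])
    finally have "sqrt (\<Sum>i<m. (us i 0)^2 + (us' i 0)^2) = bs" using bs_pos by simp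
    with en have en2: "sqrt (\<Sum>i<m. (us i s)^2 + (us' i s)^2) \<le> exp (cs* s) * bs" by simp
    have "(us (m-1) s)^2 + (us' (m-1) s)^2 \<le> (\<Sum>i<m. (us i s)^2 + (us' i s)^2)"
      by (rule member_le_sum) (use m1 in auto)
    then have "\<bar>us' (m-1) s\<bar>^2 \<le> (\<Sum>i<m. (us i s)^2 + (us' i s)^2)"
      using zero_le_power2[of "us (m-1) s"] by (simp only: power2_abs)
    then have "\<bar>us' (m-1) s\<bar> \<le> sqrt (\<Sum>i<m. (us i s)^2 + (us' i s)^2)" by (rule real_le_rsqrt)
    with en2 show ?thesis by linarith
  qed
  have Bs: "\<bar>us (m-1) t\<bar> \<le> bs * (t * phi (cs*t))" if t: "0 \<le> t" for t
  proof -
    have us0: "us (m-1) 0 = 0" using ius m1 by blast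
    have a: "(\<lambda>s. bs * (s * phi (cs* s)) - us (m-1) s) 0 \<le> (\<lambda>s. bs * (s * phi (cs* s)) - us (m-1) s) t"
    proof (rule DERIV_nonneg_imp_nondecreasing[OF t])
      fix x assume x: "0 \<le> x" "x \<le> t"
      have "((\<lambda>s. bs * (s * phi (cs* s)) - us (m-1) s) has_real_derivative bs * exp (cs*x) - us' (m-1) x) (at x)"
        by (intro DERIV_diff DERIV_cmult K_deriv ds1 m1)
      moreover have "bs * exp (cs*x) - us' (m-1) x \<ge> 0" using Bs'[OF x(1)] by (simp add: mult.commute)
      ultimately show "\<exists>y. ((\<lambda>s. bs * (s * phi (cs* s)) - us (m-1) s) has_real_derivative y) (at x) \<and> 0 \<le> y"
        by blast
    qed
    have b: "(\<lambda>s. bs * (s * phi (cs* s)) + us (m-1) s) 0 \<le> (\<lambda>s. bs * (s * phi (cs* s)) + us (m-1) s) t"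
    proof (rule DERIV_nonneg_imp_nondecreasing[OF t])
      fix x assume x: "0 \<le> x" "x \<le> t"
      have "((\<lambda>s. bs * (s * phi (cs* s)) + us (m-1) s) has_real_derivative bs * exp (cs*x) + us' (m-1) x) (at x)"
        by (intro DERIV_add DERIV_cmult K_deriv ds1 m1)
      moreover have "bs * exp (cs*x) + us' (m-1) x \<ge> 0" using Bs'[OF x(1)] by (simp add: mult.commute)
      ultimately show "\<exists>y. ((\<lambda>s. bs * (s * phi (cs* s)) + us (m-1) s) has_real_derivative y) (at x) \<and> 0 \<le> y"
        by blast
    qed
    show ?thesis using a b us0 by simp
  qed

  have rr: "r k t = (- (hp * up (m-1) t)) * vp k + (- (hs * us (m-1) t)) * vs k" if k: "k < n" for k t
  proof -
    have yk: "y k = (\<lambda>t. u k + (\<Sum>j<m. Vp k j * up j t) + (\<Sum>j<m. Vs k j * us j t))"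
      using y_def by auto
    define Y1 where "Y1 = (\<lambda>t. (\<Sum>j<m. Vp k j * up' j t) + (\<Sum>j<m. Vs k j * us' j t))"
    define Y2 where "Y2 = (\<lambda>t. (\<Sum>j<m. Vp k j * (- (\<Sum>i<m. Hp j i * up i t) + (if j = 0 then bp else 0)))
                             + (\<Sum>j<m. Vs k j * (- (\<Sum>i<m. Hs j i * us i t) + 0)))"
    have "deriv (y k) = Y1"
    proof
      fix s
      have "(y k has_real_derivative (0 + (\<Sum>j<m. Vp k j * up' j s)) + (\<Sum>j<m. Vs k j * us' j s)) (at s)"
        unfolding yk by (intro DERIV_add DERIV_const DERIV_sum DERIV_cmult dp1 ds1) auto
      then show "deriv (y k) s = Y1 s" unfolding Y1_def by (simp add: DERIV_imp_deriv)
    qed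
    moreover have "(Y1 has_real_derivative Y2 t) (at t)"
      unfolding Y1_def Y2_def by (intro DERIV_add DERIV_sum DERIV_cmult dp2 ds2) auto
    ultimately have dd: "deriv (deriv (y k)) t = Y2 t" by (simp add: DERIV_imp_deriv)
    define P where "P = (\<Sum>i<m. Vp k i * (\<Sum>j<m. Hp i j * up j t))"
    define S where "S = (\<Sum>i<m. Vs k i * (\<Sum>j<m. Hs i j * us j t))"
    have ay: "(\<Sum>l<n. A k l * y l t) = mat_vec n A u k + (\<Sum>l<n. A k l * (\<Sum>j<m. Vp l j * up j t))
                 + (\<Sum>l<n. A k l * (\<Sum>j<m. Vs l j * us j t))"
      unfolding y_def mat_vec_def by (simp add: distrib_left sum.distrib)
    have ap: "(\<Sum>l<n. A k l * (\<Sum>j<m. Vp l j * up j t)) = P + hp * vp k * up (m-1) t"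
      unfolding P_def by (rule arn_part[OF arn_p k m_pos])
    have as: "(\<Sum>l<n. A k l * (\<Sum>j<m. Vs l j * us j t)) = S + hs * vs k * us (m-1) t"
      unfolding S_def by (rule arn_part[OF arn_s k m_pos])
    have v0: "Vp k 0 * bp = g k - mat_vec n A u k"
    proof -
      have "Vp k 0 = (g k - mat_vec n A u k) / bp" using arn_p k unfolding arnoldi_def bp_def by blast
      then show ?thesis using bp_pos by simp
    qed
    have e0: "(\<Sum>j<m. Vp k j * (if j = 0 then bp else 0)) = Vp k 0 * bp"
    proof -
      have "(\<Sum>j<m. Vp k j * (if j = 0 then bp else 0)) = (\<Sum>j<m. if j = 0 then Vp k j * bp else 0)"
        by (rule sum.cong) auto
      also have "\<dots> = Vp k 0 * bp" using m_pos by (subst sum.delta) auto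
      finally show ?thesis .
    qed
    have y2: "Y2 t = - P + (g k - mat_vec n A u k) - S"
    proof -
      have "Y2 t = - (\<Sum>j<m. Vp k j * (\<Sum>i<m. Hp j i * up i t)) + (\<Sum>j<m. Vp k j * (if j = 0 then bp else 0))
                   - (\<Sum>j<m. Vs k j * (\<Sum>i<m. Hs j i * us i t))"
        unfolding Y2_def by (simp add: distrib_left right_diff_distrib sum.distrib sum_subtractf sum_negf)
      then show ?thesis unfolding P_def S_def e0 v0 .
    qed
    show ?thesis unfolding r_def dd y2 ay ap as by (simp add: algebra_simps)
  qed
  have rb: "vnorm n (\<lambda>k. r k t) \<le> hp * \<bar>up (m-1) t\<bar> + hs * \<bar>us (m-1) t\<bar>" for t
  proof -
    have "vnorm n (\<lambda>k. r k t) = vnorm n (\<lambda>k. (- (hp * up (m-1) t)) * vp k + (- (hs * us (m-1) t)) * vs k)"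
      by (rule vnorm_cong) (simp add: rr)
    also have "\<dots> \<le> vnorm n (\<lambda>k. (- (hp * up (m-1) t)) * vp k) + vnorm n (\<lambda>k. (- (hs * us (m-1) t)) * vs k)"
      by (rule vnorm_tri)
    also have "\<dots> = hp * \<bar>up (m-1) t\<bar> + hs * \<bar>us (m-1) t\<bar>"
      unfolding vnorm_scale vp1 vs1 using hp0 hs0 by (simp add: abs_mult)
    finally show ?thesis .
  qed
  have bound: "vnorm n (\<lambda>k. r k t) \<le> hp * t * phi (cp*t) * bp + hs * t * phi (cs*t) * bs
       \<and> hp * t * phi (cp*t) * bp + hs * t * phi (cs*t) * bs \<le> t * phi (cw*t) * (hp * bp + hs * bs)"
    if t: "0 \<le> t" for t
  proof
    have "hp * \<bar>up (m-1) t\<bar> \<le> hp * (bp * (t * phi (cp*t)))" using Bp[OF t] hp0 by (rule mult_left_mono)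
    moreover have "hs * \<bar>us (m-1) t\<bar> \<le> hs * (bs * (t * phi (cs*t)))" using Bs[OF t] hs0 by (rule mult_left_mono)
    ultimately show "vnorm n (\<lambda>k. r k t) \<le> hp * t * phi (cp*t) * bp + hs * t * phi (cs*t) * bs"
      using rb[of t] by (simp add: algebra_simps)
  next
    have k1: "t * phi (cp*t) \<le> t * phi (cw*t)" using K_mono[of cp cw t] t by (simp add: cw_def)
    have k2: "t * phi (cs*t) \<le> t * phi (cw*t)" using K_mono[of cs cw t] t by (simp add: cw_def)
    have "(hp * bp) * (t * phi (cp*t)) \<le> (hp * bp) * (t * phi (cw*t))"
      by (rule mult_left_mono[OF k1]) (use hp0 bp_pos in simp)
    moreover have "(hs * bs) * (t * phi (cs*t)) \<le> (hs * bs) * (t * phi (cw*t))"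
      by (rule mult_left_mono[OF k2]) (use hs0 bs_pos in simp)
    ultimately show "hp * t * phi (cp*t) * bp + hs * t * phi (cs*t) * bs \<le> t * phi (cw*t) * (hp * bp + hs * bs)"
      by (simp add: algebra_simps)
  qed
  have part1: "\<forall>t\<ge>0.
           let wp = - (1/2) * opnorm m m (\<lambda>i j. Hp i j - idmat i j);
               ws = - (1/2) * opnorm m m (\<lambda>i j. Hs i j - idmat i j);
               w = min wp ws;
               beta = vnorm n (\<lambda>k. g k - mat_vec n A u k)
           in vnorm n (\<lambda>k. r k t)
                \<le> hp * t * phi (- t * wp) * beta + hs * t * phi (- t * ws) * vnorm n v
            \<and> hp * t * phi (- t * wp) * beta + hs * t * phi (- t * ws) * vnorm n v
                \<le> t * phi (- t * w) * (hp * beta + hs * vnorm n v)"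
  proof (intro allI impI)
    fix t :: real assume t: "0 \<le> t"
    have e1: "- t * (- (1/2) * opnorm m m (\<lambda>i j. Hp i j - idmat i j)) = cp * t"
      unfolding cp_def by simp
    have e2: "- t * (- (1/2) * opnorm m m (\<lambda>i j. Hs i j - idmat i j)) = cs * t"
      unfolding cs_def by simp
    have e3: "- t * min (- (1/2) * opnorm m m (\<lambda>i j. Hp i j - idmat i j)) (- (1/2) * opnorm m m (\<lambda>i j. Hs i j - idmat i j)) = cw * t"
    proof -
      have "min (- (1/2) * opnorm m m (\<lambda>i j. Hp i j - idmat i j)) (- (1/2) * opnorm m m (\<lambda>i j. Hs i j - idmat i j)) = - cw"
        unfolding cw_def cp_def cs_def by (simp add: min_def max_def)
      then show ?thesis by simp
    qed
    show "let wp = - (1/2) * opnorm m m (\<lambda>i j. Hp i j - idmat i j);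
               ws = - (1/2) * opnorm m m (\<lambda>i j. Hs i j - idmat i j);
               w = min wp ws;
               beta = vnorm n (\<lambda>k. g k - mat_vec n A u k)
           in vnorm n (\<lambda>k. r k t)
                \<le> hp * t * phi (- t * wp) * beta + hs * t * phi (- t * ws) * vnorm n v
            \<and> hp * t * phi (- t * wp) * beta + hs * t * phi (- t * ws) * vnorm n v
                \<le> t * phi (- t * w) * (hp * beta + hs * vnorm n v)"
      unfolding Let_def e1 e2 e3 bp_def[symmetric] bs_def[symmetric] using bound[OF t] .
  qed
  have part2: "\<forall>\<epsilon>>0. \<exists>\<delta>>0. \<forall>t\<in>{0..\<delta>}. vnorm n (\<lambda>k. r k t) \<le> \<epsilon>"
  proof (intro allI impI)
    fix \<epsilon> :: real assume e: "\<epsilon> > 0"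
    define C where "C = hp * bp + hs * bs"
    have C0: "C \<ge> 0" unfolding C_def using hp0 hs0 bp_pos bs_pos by simp
    have cw0: "cw \<ge> 0" unfolding cw_def using cp0 by simp
    define D where "D = C * exp cw + 1"
    have D1: "D \<ge> 1" unfolding D_def using C0 by simp
    define \<delta> where "\<delta> = min 1 (\<epsilon> / D)"
    have dpos: "\<delta> > 0" unfolding \<delta>_def using e D1 by simp
    have "vnorm n (\<lambda>k. r k t) \<le> \<epsilon>" if t: "t \<in> {0..\<delta>}" for t
    proof -
      have t0: "0 \<le> t" and td: "t \<le> \<delta>" using t by auto
      have t1: "t \<le> 1" using td unfolding \<delta>_def by simp
      have tD: "t * D \<le> \<epsilon>"
      proof -
        have "t \<le> \<epsilon> / D" using td unfolding \<delta>_def by simp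
        then show ?thesis using D1 by (simp add: le_divide_eq)
      qed
      have "vnorm n (\<lambda>k. r k t) \<le> t * phi (cw*t) * C"
        using bound[OF t0] unfolding C_def by linarith
      also have "\<dots> \<le> t * exp (cw*t) * C" using K_le[OF cw0 t0] C0 by (rule mult_right_mono)
      also have "\<dots> \<le> t * exp cw * C"
      proof -
        have "exp (cw*t) \<le> exp cw" using cw0 t1 by (simp add: mult_left_le)
        then show ?thesis using t0 C0 by (simp add: mult_left_mono mult_right_mono)
      qed
      also have "\<dots> \<le> t * D" unfolding D_def using t0 by (simp add: algebra_simps)
      also have "\<dots> \<le> \<epsilon>" by (rule tD)
      finally show ?thesis .
    qed
    then show "\<exists>\<delta>>0. \<forall>t\<in>{0..\<delta>}. vnorm n (\<lambda>k. r k t) \<le> \<epsilon>" using dpos by blast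
  qed
  show ?thesis using part1 part2 by blast
qed


end
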